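(* For every model $\rho$, every $n \geq 1$, $\phi$, $\phi_1$ and $\phi_2$, and every $1 < i \leq |\rho|$, the following hold: 1. $(\rho, i) \models \phi_1 \mathrel{\mathbb{S}}_n \phi_2$ iff $(\rho, i) \models \phi_2$, or $(\rho, i) \models \phi_1$ and $(\rho, i-1) \models \phi_1 \mathrel{\mathbb{S}}_n \phi_2$ and $n - (\tau_i - \tau_{i-1}) \geq \mathfrak{m}(\rho, i-1, \phi_1 \mathrel{\mathbb{S}}_n \phi_2).$ 2. $(\rho, i) \models \mathsf{P}^{<}_n \phi$ iff $(\rho, i - 1) \models \phi$ and $\tau_i - \tau_{i-1} < n$, or $(\rho, i-1) \models \mathsf{P}^{<}_n \phi$ and $n - (\tau_i - \tau_{i-1}) \geq \mathfrak{m}(\rho, i-1, \mathsf{P}^{<}_n \phi).$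
   Context: A model is $\rho=(\pi,\tau)$ with $\pi$ a finite sequence of states and $\tau$ a non-decreasing sequence of natural-number timestamps, $|\pi|=|\tau|=|\rho|$. Semantics: $(\rho,i)\models\mathsf{P}^{<}_n\phi$ (strict metric past "once") iff $i>1$ and there is $j<i$ with $(\rho,j)\models\phi$ and $\tau_i-\tau_j<n$; $(\rho,i)\models\phi_1\mathrel{\mathbb{S}}_n\phi_2$ iff there is $j\le i$ with $(\rho,j)\models\phi_2$, $(\rho,k)\models\phi_1$ for all $j<k\le i$, and $\tau_i-\tau_j<n$. It is known (minimality) that if $(\rho,i)\models\phi_1\mathrel{\mathbb{S}}_n\phi_2$ (resp. $\mathsf{P}^{<}_n\phi$) then there is a least $m\le n$ such that $(\rho,i)\models\phi_1\mathrel{\mathbb{S}}_m\phi_2$ (resp. $\mathsf{P}^{<}_m\phi$), i.e. it fails for every $0<k<m$. The function $\mathfrak{m}(\rho,i,\psi)$ equals this least $m$ if $\psi$ is of the form $\phi_1\mathrel{\mathbb{S}}_n\phi_2$ or $\mathsf{P}^{<}_n\phi'$ and $(\rho,i)\models\psi$, and $0$ otherwise. *)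

theory Defs
  imports Main
begin

datatype 'p formula =
    TT
  | Atom 'p
  | Neg "'p formula"
  | And "'p formula" "'p formula"
  | Since nat "'p formula" "'p formula"
  | Once nat "'p formula"

text \<open>A model rho = (pi, tau): pi a finite sequence of states (sets of atomic
  propositions), tau a sequence of natural-number timestamps.
  Positions are 1-based: state i is pi ! (i - 1).\<close>
type_synonym 'p model = "'p set list \<times> nat list"

definition states :: "'p model \<Rightarrow> 'p set list" where
  "states \<rho> = fst \<rho>"

definition ts :: "'p model \<Rightarrow> nat \<Rightarrow> nat" where
  "ts \<rho> i = snd \<rho> ! (i - 1)"

definition len :: "'p model \<Rightarrow> nat" where
  "len \<rho> = length (fst \<rho>)"

definition wf_model :: "'p model \<Rightarrow> bool" where
  "wf_model \<rho> \<longleftrightarrow> length (fst \<rho>) = length (snd \<rho>) \<and> sorted (snd \<rho>)"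

fun sat :: "'p model \<Rightarrow> nat \<Rightarrow> 'p formula \<Rightarrow> bool" where
  "sat \<rho> i TT = True"
| "sat \<rho> i (Atom p) = (p \<in> states \<rho> ! (i - 1))"
| "sat \<rho> i (Neg \<phi>) = (\<not> sat \<rho> i \<phi>)"
| "sat \<rho> i (And \<phi> \<psi>) = (sat \<rho> i \<phi> \<and> sat \<rho> i \<psi>)"
| "sat \<rho> i (Since n \<phi>1 \<phi>2) =
     (\<exists>j. 1 \<le> j \<and> j \<le> i \<and> sat \<rho> j \<phi>2 \<and> (\<forall>k. j < k \<and> k \<le> i \<longrightarrow> sat \<rho> k \<phi>1)
          \<and> ts \<rho> i - ts \<rho> j < n)"
| "sat \<rho> i (Once n \<phi>) =
     (i > 1 \<and> (\<exists>j. 1 \<le> j \<and> j < i \<and> sat \<rho> j \<phi> \<and> ts \<rho> i - ts \<rho> j < n))"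

fun mfun :: "'p model \<Rightarrow> nat \<Rightarrow> 'p formula \<Rightarrow> nat" where
  "mfun \<rho> i (Since n \<phi>1 \<phi>2) =
     (if sat \<rho> i (Since n \<phi>1 \<phi>2) then (LEAST m. sat \<rho> i (Since m \<phi>1 \<phi>2)) else 0)"
| "mfun \<rho> i (Once n \<phi>) =
     (if sat \<rho> i (Once n \<phi>) then (LEAST m. sat \<rho> i (Once m \<phi>)) else 0)"
| "mfun \<rho> i _ = 0"

end

theory Submission
  imports Defs
begin

lemma ts_mono:
  assumes "wf_model \<rho>" "1 \<le> j" "j \<le> k" "k \<le> len \<rho>"
  shows "ts \<rho> j \<le> ts \<rho> k"
  using assms unfolding wf_model_def ts_def len_def
  by (intro sorted_nth_mono) auto

lemma since_mono: "sat \<rho> i (Since a f g) \<Longrightarrow> a \<le> b \<Longrightarrow> sat \<rho> i (Since b f g)"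
proof -
  assume h: "sat \<rho> i (Since a f g)" "a \<le> b"
  then obtain j where j: "1 \<le> j" "j \<le> i" "sat \<rho> j g" "\<forall>k. j < k \<and> k \<le> i \<longrightarrow> sat \<rho> k f"
    "ts \<rho> i - ts \<rho> j < a" by (simp only: sat.simps) blast
  have "ts \<rho> i - ts \<rho> j < b" using j(5) h(2) by linarith
  then show ?thesis using j by (simp only: sat.simps) blast
qed

lemma once_mono: "sat \<rho> i (Once a f) \<Longrightarrow> a \<le> b \<Longrightarrow> sat \<rho> i (Once b f)"
proof -
  assume h: "sat \<rho> i (Once a f)" "a \<le> b"
  then obtain j where j: "i > 1" "1 \<le> j" "j < i" "sat \<rho> j f"
    "ts \<rho> i - ts \<rho> j < a" by (simp only: sat.simps) blast
  have "ts \<rho> i - ts \<rho> j < b" using j(5) h(2) by linarith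
  then show ?thesis using j by (simp only: sat.simps) blast
qed

lemma least_le_iff:
  fixes P :: "nat \<Rightarrow> bool"
  assumes "P n" "\<And>a b. P a \<Longrightarrow> a \<le> b \<Longrightarrow> P b"
  shows "(LEAST m. P m) \<le> k \<longleftrightarrow> P k"
proof
  assume le: "(LEAST m. P m) \<le> k"
  have "P (LEAST m. P m)" using assms(1) by (rule LeastI)
  from assms(2)[OF this le] show "P k" .
next
  assume "P k"
  then show "(LEAST m. P m) \<le> k" by (rule Least_le)
qed

lemma since_m_iff:
  assumes "sat \<rho> i (Since n f g)"
  shows "(int n - int d \<ge> int (mfun \<rho> i (Since n f g))) \<longleftrightarrow> d \<le> n \<and> sat \<rho> i (Since (n - d) f g)"
proof -
  have L: "(LEAST m. sat \<rho> i (Since m f g)) \<le> k \<longleftrightarrow> sat \<rho> i (Since k f g)" for k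
    by (rule least_le_iff[where P="\<lambda>m. sat \<rho> i (Since m f g)", OF assms]) (rule since_mono)
  have "\<not> sat \<rho> i (Since 0 f g)" by simp
  hence pos: "(LEAST m. sat \<rho> i (Since m f g)) \<ge> 1"
    using L[of 0] by linarith
  have M: "mfun \<rho> i (Since n f g) = (LEAST m. sat \<rho> i (Since m f g))"
    using assms by (simp only: mfun.simps if_True)
  show ?thesis
  proof (cases "d \<le> n")
    case True
    have e1: "(int n - int d \<ge> int (mfun \<rho> i (Since n f g))) \<longleftrightarrow> (LEAST m. sat \<rho> i (Since m f g)) \<le> n - d"
      unfolding M using True by linarith
    show ?thesis using e1 L[of "n-d"] True by blast
  next
    case False
    have "\<not> (int n - int d \<ge> int (mfun \<rho> i (Since n f g)))"
      unfolding M using False pos by linarith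
    then show ?thesis using False by blast
  qed
qed

lemma once_m_iff:
  assumes "sat \<rho> i (Once n f)"
  shows "(int n - int d \<ge> int (mfun \<rho> i (Once n f))) \<longleftrightarrow> d \<le> n \<and> sat \<rho> i (Once (n - d) f)"
proof -
  have L: "(LEAST m. sat \<rho> i (Once m f)) \<le> k \<longleftrightarrow> sat \<rho> i (Once k f)" for k
    by (rule least_le_iff[where P="\<lambda>m. sat \<rho> i (Once m f)", OF assms]) (rule once_mono)
  have "\<not> sat \<rho> i (Once 0 f)" by simp
  hence pos: "(LEAST m. sat \<rho> i (Once m f)) \<ge> 1"
    using L[of 0] by linarith
  have M: "mfun \<rho> i (Once n f) = (LEAST m. sat \<rho> i (Once m f))"
    using assms by (simp only: mfun.simps if_True)
  show ?thesis
  proof (cases "d \<le> n")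
    case True
    have e1: "(int n - int d \<ge> int (mfun \<rho> i (Once n f))) \<longleftrightarrow> (LEAST m. sat \<rho> i (Once m f)) \<le> n - d"
      unfolding M using True by linarith
    show ?thesis using e1 L[of "n-d"] True by blast
  next
    case False
    have "\<not> (int n - int d \<ge> int (mfun \<rho> i (Once n f)))"
      unfolding M using False pos by linarith
    then show ?thesis using False by blast
  qed
qed

theorem theorem1:
  fixes \<rho> :: "'p model" and n i :: nat and \<phi> \<phi>1 \<phi>2 :: "'p formula"
  assumes "wf_model \<rho>" and "n \<ge> 1" and "1 < i" and "i \<le> len \<rho>"
  shows "(sat \<rho> i (Since n \<phi>1 \<phi>2) \<longleftrightarrow>
            sat \<rho> i \<phi>2 \<or>
            (sat \<rho> i \<phi>1 \<and> sat \<rho> (i - 1) (Since n \<phi>1 \<phi>2) \<and>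
             int n - (int (ts \<rho> i) - int (ts \<rho> (i - 1))) \<ge> int (mfun \<rho> (i - 1) (Since n \<phi>1 \<phi>2))))
       \<and> (sat \<rho> i (Once n \<phi>) \<longleftrightarrow>
            (sat \<rho> (i - 1) \<phi> \<and> ts \<rho> i - ts \<rho> (i - 1) < n) \<or>
            (sat \<rho> (i - 1) (Once n \<phi>) \<and>
             int n - (int (ts \<rho> i) - int (ts \<rho> (i - 1))) \<ge> int (mfun \<rho> (i - 1) (Once n \<phi>))))"
proof -
  define d where "d = ts \<rho> i - ts \<rho> (i - 1)"
  have tsle: "ts \<rho> (i-1) \<le> ts \<rho> i" using ts_mono[OF assms(1), of "i-1" i] assms by simp
  have mono: "\<And>j. 1 \<le> j \<Longrightarrow> j \<le> i - 1 \<Longrightarrow> ts \<rho> j \<le> ts \<rho> (i-1)"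
    using ts_mono[OF assms(1)] assms by simp
  have dint: "int (ts \<rho> i) - int (ts \<rho> (i - 1)) = int d" using tsle d_def by simp
  have key: "\<And>j. 1 \<le> j \<Longrightarrow> j \<le> i - 1 \<Longrightarrow>
      (ts \<rho> i - ts \<rho> j < n) \<longleftrightarrow> (d \<le> n \<and> ts \<rho> (i-1) - ts \<rho> j < n - d)"
  proof -
    fix j assume "1 \<le> j" "j \<le> i - 1"
    hence "ts \<rho> j \<le> ts \<rho> (i-1)" by (rule mono)
    thus "(ts \<rho> i - ts \<rho> j < n) \<longleftrightarrow> (d \<le> n \<and> ts \<rho> (i-1) - ts \<rho> j < n - d)"
      using tsle d_def by linarith
  qed
  have key2: "\<And>j. 1 \<le> j \<Longrightarrow> j \<le> i - 1 \<Longrightarrow> ts \<rho> i - ts \<rho> j < n \<Longrightarrow> ts \<rho> (i-1) - ts \<rho> j < n"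
    using mono tsle by (meson diff_le_mono le_less_trans)
  have A: "sat \<rho> i (Since n \<phi>1 \<phi>2) \<longleftrightarrow>
            sat \<rho> i \<phi>2 \<or>
            (sat \<rho> i \<phi>1 \<and> sat \<rho> (i - 1) (Since n \<phi>1 \<phi>2) \<and>
             int n - int d \<ge> int (mfun \<rho> (i - 1) (Since n \<phi>1 \<phi>2)))"
  proof
    assume "sat \<rho> i (Since n \<phi>1 \<phi>2)"
    then obtain j where j: "1 \<le> j" "j \<le> i" "sat \<rho> j \<phi>2" "\<forall>k. j < k \<and> k \<le> i \<longrightarrow> sat \<rho> k \<phi>1"
      "ts \<rho> i - ts \<rho> j < n" by auto
    show "sat \<rho> i \<phi>2 \<or> (sat \<rho> i \<phi>1 \<and> sat \<rho> (i - 1) (Since n \<phi>1 \<phi>2) \<and>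
             int n - int d \<ge> int (mfun \<rho> (i - 1) (Since n \<phi>1 \<phi>2)))"
    proof (cases "j = i")
      case True then show ?thesis using j by simp
    next
      case False
      hence ji: "j \<le> i - 1" using j by simp
      have s: "sat \<rho> (i - 1) (Since n \<phi>1 \<phi>2)"
        using j ji key2[OF j(1) ji] by auto
      have "d \<le> n \<and> sat \<rho> (i-1) (Since (n - d) \<phi>1 \<phi>2)"
        using j ji key[OF j(1) ji] by auto
      moreover have "sat \<rho> i \<phi>1" using j(4) j(2) False by simp
      ultimately show ?thesis using since_m_iff[OF s, of d] s by blast
    qed
  next
    assume h: "sat \<rho> i \<phi>2 \<or> (sat \<rho> i \<phi>1 \<and> sat \<rho> (i - 1) (Since n \<phi>1 \<phi>2) \<and>
             int n - int d \<ge> int (mfun \<rho> (i - 1) (Since n \<phi>1 \<phi>2)))"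
    show "sat \<rho> i (Since n \<phi>1 \<phi>2)"
    proof (cases "sat \<rho> i \<phi>2")
      case True then show ?thesis using assms by (auto intro!: exI[of _ i])
    next
      case False
      hence h1: "sat \<rho> i \<phi>1" and s: "sat \<rho> (i - 1) (Since n \<phi>1 \<phi>2)"
        and h3: "int n - int d \<ge> int (mfun \<rho> (i - 1) (Since n \<phi>1 \<phi>2))" using h False by blast+
      have "d \<le> n \<and> sat \<rho> (i-1) (Since (n - d) \<phi>1 \<phi>2)" using since_m_iff[OF s] h3 by blast
      then obtain j where j: "1 \<le> j" "j \<le> i - 1" "sat \<rho> j \<phi>2" "\<forall>k. j < k \<and> k \<le> i - 1 \<longrightarrow> sat \<rho> k \<phi>1"
        "ts \<rho> (i-1) - ts \<rho> j < n - d" "d \<le> n" by auto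
      have "ts \<rho> i - ts \<rho> j < n" using key[OF j(1,2)] j by simp
      moreover have "\<forall>k. j < k \<and> k \<le> i \<longrightarrow> sat \<rho> k \<phi>1"
        proof (intro allI impI)
        fix k assume "j < k \<and> k \<le> i"
        thus "sat \<rho> k \<phi>1" using j(4) h1 by (cases "k = i") auto
      qed
      ultimately show ?thesis using j assms by auto
    qed
  qed
  have B: "sat \<rho> i (Once n \<phi>) \<longleftrightarrow>
            (sat \<rho> (i - 1) \<phi> \<and> d < n) \<or>
            (sat \<rho> (i - 1) (Once n \<phi>) \<and>
             int n - int d \<ge> int (mfun \<rho> (i - 1) (Once n \<phi>)))"
  proof
    assume "sat \<rho> i (Once n \<phi>)"
    then obtain j where j: "1 \<le> j" "j < i" "sat \<rho> j \<phi>" "ts \<rho> i - ts \<rho> j < n" by auto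
    show "(sat \<rho> (i - 1) \<phi> \<and> d < n) \<or> (sat \<rho> (i - 1) (Once n \<phi>) \<and>
             int n - int d \<ge> int (mfun \<rho> (i - 1) (Once n \<phi>)))"
    proof (cases "j = i - 1")
      case True then show ?thesis using j d_def by simp
    next
      case False
      hence ji: "j < i - 1" using j by simp
      have s: "sat \<rho> (i - 1) (Once n \<phi>)"
        using j ji key2[of j] by auto
      have "d \<le> n \<and> sat \<rho> (i-1) (Once (n - d) \<phi>)"
        using j ji key[of j] by auto
      then show ?thesis using once_m_iff[OF s, of d] s by blast
    qed
  next
    assume h: "(sat \<rho> (i - 1) \<phi> \<and> d < n) \<or> (sat \<rho> (i - 1) (Once n \<phi>) \<and>
             int n - int d \<ge> int (mfun \<rho> (i - 1) (Once n \<phi>)))"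
    show "sat \<rho> i (Once n \<phi>)"
    proof (cases "sat \<rho> (i - 1) \<phi> \<and> d < n")
      case True
      then show ?thesis using assms d_def by (auto intro!: exI[of _ "i - 1"])
    next
      case False
      hence s: "sat \<rho> (i - 1) (Once n \<phi>)"
        and h3: "int n - int d \<ge> int (mfun \<rho> (i - 1) (Once n \<phi>))" using h False by blast+
      have "d \<le> n \<and> sat \<rho> (i-1) (Once (n - d) \<phi>)" using once_m_iff[OF s] h3 by blast
      then obtain j where j: "1 \<le> j" "j < i - 1" "sat \<rho> j \<phi>"
        "ts \<rho> (i-1) - ts \<rho> j < n - d" "d \<le> n" by auto
      have "ts \<rho> i - ts \<rho> j < n" using key[of j] j by simp
      then show ?thesis using j assms by auto
    qed
  qed
  show ?thesis unfolding dint d_def[symmetric] using A B by blast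
qed

end
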